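(* Let $I\subseteq[0,\infty)$ be an interval, let $f:I\to\mathbb{R}$ be twice differentiable on $I^\circ$, and let $a,b\in I^\circ$ with $a<b$ such that $f''\in L^1[a,b]$. Let $q>1$, $p=\frac{q}{q-1}$, and assume $|f''|^q$ is quasi-convex on $[a,b]$. If $M=\sup_{x\in(a,b)}|f''(x)|<\infty$, then $$\left|\frac{f(a)+f(b)}{2}-\frac{1}{b-a}\int_a^b f(x)\,dx\right|\le \frac{(b-a)^2}{2^{1+\frac1q}}\,M\,\bigl(\beta(2,p+1)\bigr)^{\frac1p}.$$
   Context: A function $g:[a,b]\to\mathbb{R}$ is quasi-convex on $[a,b]$ if $g(\lambda x+(1-\lambda)y)\le\max\{g(x),g(y)\}$ for all $x,y\in[a,b]$ and $\lambda\in[0,1]$. $\beta(x,y)=\int_0^1 t^{x-1}(1-t)^{y-1}\,dt$ for $x,y>0$. *)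

theory Defs
  imports "HOL-Analysis.Analysis"
begin

definition quasi_convex_on :: "real set \<Rightarrow> (real \<Rightarrow> real) \<Rightarrow> bool" where
  "quasi_convex_on S g \<longleftrightarrow>
     (\<forall>x\<in>S. \<forall>y\<in>S. \<forall>t\<in>{0..1::real}.
        g (t * x + (1 - t) * y) \<le> max (g x) (g y))"

definition beta :: "real \<Rightarrow> real \<Rightarrow> real" where
  "beta x y = integral {0..1} (\<lambda>t. t powr (x - 1) * (1 - t) powr (y - 1))"

end

theory Submission
  imports Defs
begin

lemma trap_convex:
  fixes g g' g'' :: "real \<Rightarrow> real"
  assumes ab: "a<b" and d1: "\<And>x. x\<in>{a..b} \<Longrightarrow> (g has_real_derivative g' x) (at x)"
   and d2: "\<And>x. x\<in>{a..b} \<Longrightarrow> (g' has_real_derivative g'' x) (at x)"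
   and nn: "\<And>x. x\<in>{a<..<b} \<Longrightarrow> g'' x \<ge> 0"
  shows "integral {a..b} g \<le> (b-a)*(g a + g b)/2"
proof -
  have mono: "g' x \<le> g' y" if xy: "x\<in>{a..b}" "y\<in>{a..b}" "x\<le>y" for x y
  proof (rule DERIV_nonneg_imp_increasing_open[of x y g'])
    show "x \<le> y" by fact
    show "\<exists>y. DERIV g' z :> y \<and> 0 \<le> y" if "x < z" "z < y" for z
      using d2[of z] nn[of z] that xy by auto
    show "continuous_on {x..y} g'"
      using xy by (intro continuous_at_imp_continuous_on ballI DERIV_isCont[OF d2]) auto
  qed
  have cvx: "convex_on {a..b} g"
    by (rule convex_on_realI[where f'=g']) (auto intro: d1 mono)
  have le: "g x \<le> g a + (x-a)/(b-a)*(g b - g a)" if x: "x\<in>{a..b}" for x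
  proof -
    define t where "t = (x-a)/(b-a)"
    have t: "0 \<le> t" "t \<le> 1" using x ab by (auto simp: t_def divide_simps)
    have e1: "(1 - t) *\<^sub>R a + t *\<^sub>R b = a + t*(b-a)" by (simp add: algebra_simps)
    have "t*(b-a) = x - a" using ab by (simp add: t_def)
    hence "(1 - t) *\<^sub>R a + t *\<^sub>R b = x" using e1 by simp
    moreover have "g ((1 - t) *\<^sub>R a + t *\<^sub>R b) \<le> (1 - t) * g a + t * g b"
      using convex_onD[OF cvx t] ab by auto
    ultimately have "g x \<le> (1-t)*g a + t*g b" by simp
    also have "\<dots> = g a + t*(g b - g a)" by (simp add: algebra_simps)
    finally show ?thesis by (simp add: t_def)
  qed
  have cont: "continuous_on {a..b} g"
    by (intro continuous_at_imp_continuous_on ballI DERIV_isCont[OF d1]) auto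
  define c where "c = (g b - g a)/(2*(b-a))"
  have "((\<lambda>x. g a + (x-a)/(b-a)*(g b - g a)) has_integral
        ((g a * b + (b-a)^2*c) - (g a * a + (a-a)^2*c))) {a..b}"
  proof (rule fundamental_theorem_of_calculus)
    show "a \<le> b" using ab by simp
    fix x assume "x \<in> {a..b}"
    have "(x-a)/(b-a)*(g b - g a) = 2*(x-a)*c" using ab by (simp add: c_def field_simps)
    then show "((\<lambda>x. g a * x + (x-a)^2*c) has_vector_derivative g a + (x-a)/(b-a)*(g b - g a)) (at x within {a..b})"
      unfolding has_real_derivative_iff_has_vector_derivative [symmetric]
      by (auto intro!: derivative_eq_intros)
  qed
  moreover have "(g a * b + (b-a)^2*c) - (g a * a + (a-a)^2*c)
     = (b-a)*(g a + g b)/2" using ab by (simp add: c_def field_simps power2_eq_square)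
  ultimately have il: "((\<lambda>x. g a + (x-a)/(b-a)*(g b - g a)) has_integral (b-a)*(g a + g b)/2) {a..b}"
    by metis
  show ?thesis
    by (rule has_integral_le[OF integrable_integral[OF integrable_continuous_interval[OF cont]] il])
       (use le in auto)
qed

lemma beta_val:
  fixes p :: real assumes p: "p>0"
  shows "((\<lambda>t. t * (1-t) powr p) has_integral 1/((p+1)*(p+2))) {0..1}"
proof -
  define F where "F t = (1-t) powr (p+2)/(p+2) - (1-t) powr (p+1)/(p+1)" for t :: real
  have "((\<lambda>t. t * (1-t) powr p) has_integral (F 1 - F 0)) {0..1}"
  proof (rule fundamental_theorem_of_calculus_interior)
    show "continuous_on {0..1} F" unfolding F_def using p
      by (intro continuous_intros continuous_on_powr') auto
    fix t :: real assume t: "t \<in> {0<..<1}"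
    then have u: "1 - t > 0" by auto
    have e: "(1-t) powr (p+1) = (1-t) powr p * (1-t)" using u by (simp add: powr_add)
    have d1: "((\<lambda>t. (1-t) powr (p+2)) has_real_derivative ((p+2)*(1-t) powr (p+2-1)) * (-1)) (at t)"
      by (rule DERIV_chain2[OF has_real_derivative_powr]) (use u in \<open>auto intro!: derivative_eq_intros\<close>)
    have d2: "((\<lambda>t. (1-t) powr (p+1)) has_real_derivative ((p+1)*(1-t) powr (p+1-1)) * (-1)) (at t)"
      by (rule DERIV_chain2[OF has_real_derivative_powr]) (use u in \<open>auto intro!: derivative_eq_intros\<close>)
    have "(F has_real_derivative ((p+2)*(1-t) powr (p+2-1)) * (-1) / (p+2) - ((p+1)*(1-t) powr (p+1-1)) * (-1) / (p+1)) (at t)"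
      unfolding F_def by (intro DERIV_diff DERIV_cdivide d1 d2)
    moreover have "((p+2)*(1-t) powr (p+2-1)) * (-1) / (p+2) - ((p+1)*(1-t) powr (p+1-1)) * (-1) / (p+1)
       = - ((1-t) powr (p+1)) + (1-t) powr p" using p by (simp add: add_ac)
    ultimately have "(F has_real_derivative (- ((1-t) powr (p+1)) + (1-t) powr p)) (at t)" by simp
    moreover have "- ((1-t) powr (p+1)) + (1-t) powr p = t * (1-t) powr p"
      unfolding e by (simp add: algebra_simps)
    ultimately show "(F has_vector_derivative t * (1-t) powr p) (at t)"
      unfolding has_real_derivative_iff_has_vector_derivative [symmetric] by simp
  qed simp
  moreover have "F 1 - F 0 = 1/((p+1)*(p+2))" unfolding F_def using p
    by (simp add: field_simps)
  ultimately show ?thesis by simp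
qed

lemma const_ineq:
  fixes p q :: real
  assumes q: "q > 1" and p: "p = q / (q - 1)"
  shows "1/12 \<le> beta 2 (p+1) powr (1/p) / 2 powr (1 + 1/q)"
proof -
  have p1: "p > 1" using q unfolding p by (simp add: less_divide_eq)
  have ip: "1/p = (q-1)/q" unfolding p by simp
  have pq: "1/p + 1/q = 1" unfolding ip using q by (simp add: field_simps)
  define \<beta> where "\<beta> = 1/((p+1)*(p+2))"
  have bpos: "\<beta> > 0" using p1 by (simp add: \<beta>_def)
  have bi: "((\<lambda>t. t * (1-t) powr p) has_integral \<beta>) {0..1}"
    unfolding \<beta>_def by (rule beta_val) (use p1 in simp)
  have "integral {0..1} (\<lambda>t. t powr (2 - 1) * (1 - t) powr (p + 1 - 1)) = integral {0..1} (\<lambda>t. t * (1-t) powr p)"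
    by (rule integral_cong) auto
  then have beq: "beta 2 (p+1) = \<beta>" unfolding beta_def using integral_unique[OF bi] by simp
  define K where "K = \<beta> powr (1/p) * (1/2) powr (1/q)"
  have Kpos: "K > 0" using bpos by (simp add: K_def)
  have pw: "t * (1-t) / K \<le> t * (1-t) powr p / (p * \<beta>) + 2 * t / q" if t: "t \<in> {0..1}" for t
  proof -
    define A where "A = t powr (1/p) * (1-t) / \<beta> powr (1/p)"
    define B where "B = t powr (1/q) / (1/2) powr (1/q)"
    have A0: "A \<ge> 0" "B \<ge> 0" using t by (auto simp: A_def B_def)
    have tt: "t powr (1/p) * t powr (1/q) = t"
    proof (cases "t = 0")
      case False then show ?thesis using t pq by (simp add: powr_add[symmetric])
    qed simp
    have "A * B = t * (1-t) / K"
      unfolding A_def B_def K_def using tt by (simp add: field_simps)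
    moreover have "A powr p = t * (1-t) powr p / \<beta>"
      unfolding A_def using t bpos p1
      by (simp add: powr_divide powr_mult powr_powr)
    moreover have "B powr q = 2 * t"
      unfolding B_def using t q
      by (simp add: powr_divide powr_powr powr_mult mult.commute)
    ultimately show ?thesis
      using Youngs_inequality[OF p1 q pq A0] by (simp add: field_simps)
  qed
  have i1: "((\<lambda>t. t * (1-t) / K) has_integral (1/6)/K) {0..1}"
  proof -
    have "((\<lambda>t. t * (1-t)) has_integral ((1::real)^2/2 - 1^3/3) - (0^2/2 - 0^3/3)) {0..1}"
      by (rule fundamental_theorem_of_calculus)
        (auto simp: has_real_derivative_iff_has_vector_derivative [symmetric]
              intro!: derivative_eq_intros simp: algebra_simps power2_eq_square)
    from has_integral_cmul[OF this, of "1/K"] show ?thesis by (simp add: mult.commute)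
  qed
  have i2: "((\<lambda>t. t * (1-t) powr p / (p * \<beta>) + 2 * t / q) has_integral 1/p + 1/q) {0..1}"
  proof -
    have a: "((\<lambda>t. t * (1-t) powr p / (p * \<beta>)) has_integral 1/p) {0..1}"
      using has_integral_cmul[OF bi, of "1/(p*\<beta>)"] bpos p1 by simp
    have "((\<lambda>t. t) has_integral ((1::real)^2/2 - 0^2/2)) {0..1}"
      by (rule fundamental_theorem_of_calculus)
        (auto simp: has_real_derivative_iff_has_vector_derivative [symmetric]
              intro!: derivative_eq_intros)
    from has_integral_cmul[OF this, of "2/q"] have b: "((\<lambda>t. 2 * t / q) has_integral 1/q) {0..1}"
      by simp
    show ?thesis by (rule has_integral_add[OF a b])
  qed
  have "(1/6)/K \<le> 1/p + 1/q"
    by (rule has_integral_le[OF i1 i2]) (use pw in auto)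
  then have "1/6 \<le> K" using Kpos pq by (simp add: field_simps)
  then have k2: "1/12 \<le> K/2" by linarith
  have e: "\<beta> powr (1/p) / 2 powr (1 + 1/q) = K / 2"
    unfolding K_def by (simp add: powr_add powr_divide)
  show ?thesis unfolding beq e by (rule k2)
qed

theorem corollary2p3:
  fixes I :: "real set" and f f' f'' :: "real \<Rightarrow> real" and a b q p M :: real
  assumes I_int: "is_interval I" and I_nonneg: "I \<subseteq> {0..}"
    and f': "\<And>x. x \<in> interior I \<Longrightarrow> (f has_real_derivative f' x) (at x)"
    and f'': "\<And>x. x \<in> interior I \<Longrightarrow> (f' has_real_derivative f'' x) (at x)"
    and ab: "a \<in> interior I" "b \<in> interior I" "a < b"
    and L1: "f'' absolutely_integrable_on {a..b}"
    and q: "q > 1" and p: "p = q / (q - 1)"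
    and qc: "quasi_convex_on {a..b} (\<lambda>x. \<bar>f'' x\<bar> powr q)"
    and bdd: "bdd_above ((\<lambda>x. \<bar>f'' x\<bar>) ` {a<..<b})"
    and M: "M = (SUP x\<in>{a<..<b}. \<bar>f'' x\<bar>)"
  shows "\<bar>(f a + f b) / 2 - (1 / (b - a)) * integral {a..b} f\<bar>
           \<le> (b - a)^2 / 2 powr (1 + 1 / q) * M * (beta 2 (p + 1)) powr (1 / p)"
proof -
  have cvxI: "convex (interior I)" by (intro convex_interior is_interval_convex I_int)
  have sub: "{a..b} \<subseteq> interior I"
    using convex_contains_segment[THEN iffD1, OF cvxI, rule_format, OF ab(1,2)] ab(3)
    by (simp add: closed_segment_eq_real_ivl)
  have Mb: "\<bar>f'' x\<bar> \<le> M" if "x \<in> {a<..<b}" for x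
    unfolding M by (rule cSUP_upper[OF that bdd])
  have M0: "M \<ge> 0" using Mb[of "(a+b)/2"] ab(3) by auto
  have cf: "continuous_on {a..b} f"
    by (intro continuous_at_imp_continuous_on ballI DERIV_isCont[OF f']) (use sub in auto)
  have hf: "(f has_integral integral {a..b} f) {a..b}"
    by (rule integrable_integral[OF integrable_continuous_interval[OF cf]])
  have hx2: "((\<lambda>x. M/2*x^2) has_integral (M/2*b^3/3 - M/2*a^3/3)) {a..b}"
    by (rule fundamental_theorem_of_calculus)
      (use ab(3) in \<open>auto simp: has_real_derivative_iff_has_vector_derivative [symmetric]
              intro!: derivative_eq_intros simp: algebra_simps power2_eq_square\<close>)
  define J where "J = integral {a..b} f"
  have i1: "integral {a..b} (\<lambda>x. M/2*x^2 - f x) = (M/2*b^3/3 - M/2*a^3/3) - J"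
    unfolding J_def by (rule integral_unique[OF has_integral_diff[OF hx2 hf]])
  have i2: "integral {a..b} (\<lambda>x. f x + M/2*x^2) = J + (M/2*b^3/3 - M/2*a^3/3)"
    unfolding J_def by (rule integral_unique[OF has_integral_add[OF hf hx2]])
  have t1: "integral {a..b} (\<lambda>x. M/2*x^2 - f x) \<le> (b-a)*((M/2*a^2 - f a) + (M/2*b^2 - f b))/2"
  proof (rule trap_convex[where g' = "\<lambda>x. M*x - f' x" and g'' = "\<lambda>x. M - f'' x"])
    show "a < b" by fact
    fix x assume x: "x \<in> {a..b}"
    then have xi: "x \<in> interior I" using sub by auto
    show "((\<lambda>x. M/2*x^2 - f x) has_real_derivative M*x - f' x) (at x)"
      using f'[OF xi] by (auto intro!: derivative_eq_intros)
    show "((\<lambda>x. M*x - f' x) has_real_derivative M - f'' x) (at x)"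
      using f''[OF xi] by (auto intro!: derivative_eq_intros)
  next
    fix x assume "x \<in> {a<..<b}"
    then show "0 \<le> M - f'' x" using Mb[of x] by auto
  qed
  have t2: "integral {a..b} (\<lambda>x. f x + M/2*x^2) \<le> (b-a)*((f a + M/2*a^2) + (f b + M/2*b^2))/2"
  proof (rule trap_convex[where g' = "\<lambda>x. f' x + M*x" and g'' = "\<lambda>x. f'' x + M"])
    show "a < b" by fact
    fix x assume x: "x \<in> {a..b}"
    then have xi: "x \<in> interior I" using sub by auto
    show "((\<lambda>x. f x + M/2*x^2) has_real_derivative f' x + M*x) (at x)"
      using f'[OF xi] by (auto intro!: derivative_eq_intros)
    show "((\<lambda>x. f' x + M*x) has_real_derivative f'' x + M) (at x)"
      using f''[OF xi] by (auto intro!: derivative_eq_intros)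
  next
    fix x assume "x \<in> {a<..<b}"
    then show "0 \<le> f'' x + M" using Mb[of x] by auto
  qed
  define E where "E = (f a + f b) / 2 - (1 / (b - a)) * J"
  have eE: "(b-a)*E = (b-a)*(f a + f b)/2 - J" unfolding E_def using ab(3) by (simp add: field_simps)
  have id: "(b-a)*(M/2*a^2 + M/2*b^2)/2 - (M/2*b^3/3 - M/2*a^3/3) = M*(b-a)^3/12"
    by (simp add: field_simps power2_eq_square power3_eq_cube)
  have s1: "(b-a)*((M/2*a^2 - f a) + (M/2*b^2 - f b))/2 = (b-a)*(M/2*a^2 + M/2*b^2)/2 - (b-a)*(f a + f b)/2"
    by (simp add: field_simps)
  have s2: "(b-a)*((f a + M/2*a^2)+(f b + M/2*b^2))/2 = (b-a)*(f a+f b)/2 + (b-a)*(M/2*a^2+M/2*b^2)/2"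
    by (simp add: field_simps)
  have up: "(b-a)*E \<le> M*(b-a)^3/12"
    using t1 i1 eE id by (simp only: s1)
  have lo: "-(M*(b-a)^3/12) \<le> (b-a)*E"
    using t2 i2 eE id by (simp only: s2)
  have "(b-a)*\<bar>E\<bar> \<le> (b-a) * (M*(b-a)^2/12)"
  proof -
    have "\<bar>(b-a)*E\<bar> \<le> M*(b-a)^3/12" using up lo by linarith
    moreover have "\<bar>(b-a)*E\<bar> = (b-a)*\<bar>E\<bar>" using ab(3) by (simp add: abs_mult)
    moreover have "M*(b-a)^3/12 = (b-a) * (M*(b-a)^2/12)" by (simp add: power3_eq_cube power2_eq_square)
    ultimately show ?thesis by simp
  qed
  then have bE: "\<bar>E\<bar> \<le> M*(b-a)^2/12" using ab(3) by simp
  have "M*(b-a)^2/12 = ((b-a)^2 * M) * (1/12)" by simp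
  also have "\<dots> \<le> ((b-a)^2 * M) * (beta 2 (p+1) powr (1/p) / 2 powr (1 + 1/q))"
    by (rule mult_left_mono[OF const_ineq[OF q p]]) (use M0 in simp)
  also have "\<dots> = (b - a)^2 / 2 powr (1 + 1 / q) * M * (beta 2 (p + 1)) powr (1 / p)"
    by simp
  finally show ?thesis using bE unfolding E_def J_def by linarith
qed

end
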